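(* Let $j\in\{1,\dots,l\}$. Let $(R_h)\subset SO(3)$ with $R_h\in\mathcal R^j_h$ for every $h$, and let $(W_h)\subset\mathbb R^{3\times3}_{\mathrm{skw}}$ with $|W_h|=1$ and $R_hW_h\in N\mathcal R^j_h{}_{R_h}$ for every $h$. Then, up to a subsequence, $R_hW_h\to RW$ where $R\in\mathcal R^j$, $W\in\mathbb R^{3\times3}_{\mathrm{skw}}$, $|W|=1$ and $RW\in N\mathcal R^j_R$.
   Context: Let $U_1,\dots,U_l\in\mathbb R^{3\times3}$ be symmetric positive definite, $K_i=SO(3)U_i$, $K=\bigcup_iK_i$. $S\subset\mathbb R^2$ open bounded connected Lipschitz. Let $\alpha\ge2$, $\gamma=\alpha/2$, $q\in(1,2]$, $q'$ its conjugate; $f_h\in L^{q'}(S;\mathbb R^3)$ with $\int_Sf_h=0$ and $h^{-\gamma-1}f_h\to f$ in $L^{q'}(S;\mathbb R^3)$ as $h\to0$ along a sequence. For $A\in\mathbb R^{3\times3}$: $F_h(A)=\int_Sf_h\cdot A(x_1,x_2,0)^Tdx'$, $F(A)=\int_Sf\cdot A(x_1,x_2,0)^Tdx'$. $\mathcal M_h=\operatorname{argmax}_KF_h$, $\mathcal M=\operatorname{argmax}_KF$; $\mathcal R^j=\operatorname{argmax}_{R\in SO(3)}F(RU_j)$, $\mathcal R^j_h=\operatorname{argmax}_{R\in SO(3)}F_h(RU_j)$; $\Lambda_h,\Lambda\subset\{1,\dots,l\}$ with $\mathcal M_h=\bigcup_{j\in\Lambda_h}\mathcal R^j_hU_j$,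 $\mathcal M=\bigcup_{j\in\Lambda}\mathcal R^jU_j$. For $R\in\mathcal R^j$: $T\mathcal R^j_R=\{RW:W\in\mathbb R^{3\times3}_{\mathrm{skw}},F(RW^2U_j)=0\}$, $N\mathcal R^j_R=\{RW:W\in\mathbb R^{3\times3}_{\mathrm{skw}},RW\perp T\mathcal R^j_R\}$ (Frobenius product); $T\mathcal R^j_h{}_R$, $N\mathcal R^j_h{}_R$ are defined analogously with $F_h$ for $R\in\mathcal R^j_h$. $\mathcal R^j,\mathcal R^j_h$ are closed submanifolds of $SO(3)$ with these tangent spaces. Standing assumptions: (F1) $\Lambda_h=\Lambda$ for $h$ small; (F2) $\dim\mathcal R^j_h\to\dim\mathcal R^j$ for every $j\in\Lambda$. *)

theory Defs
  imports "HOL-Analysis.Analysis"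
begin

type_synonym mat3 = "real^3^3"

definition SO3 :: "mat3 set" where
  "SO3 = {R. rotation_matrix R}"

definition skew :: "mat3 \<Rightarrow> bool" where
  "skew W \<longleftrightarrow> transpose W = - W"

definition sym_pos_def :: "mat3 \<Rightarrow> bool" where
  "sym_pos_def U \<longleftrightarrow> transpose U = U \<and> (\<forall>x::real^3. x \<noteq> 0 \<longrightarrow> x \<bullet> (U *v x) > 0)"

definition lipschitz_domain :: "(real^2) set \<Rightarrow> bool" where
  "lipschitz_domain S \<longleftrightarrow> open S \<and>
     (\<forall>p\<in>frontier S. \<exists>r>0. \<exists>Q::real^2^2. \<exists>g::real\<Rightarrow>real. \<exists>L.
        rotation_matrix Q \<and> L-lipschitz_on UNIV g \<and>
        (\<forall>x\<in>ball p r. x \<in> S \<longleftrightarrow> (Q *v (x - p))$2 < g ((Q *v (x - p))$1)))"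

definition load :: "(real^2) set \<Rightarrow> (real^2 \<Rightarrow> real^3) \<Rightarrow> mat3 \<Rightarrow> real" where
  "load S g A = integral\<^sup>L (lebesgue_on S) (\<lambda>x. g x \<bullet> (A *v vector [x$1, x$2, 0]))"

definition argmax_on :: "(mat3 \<Rightarrow> real) \<Rightarrow> mat3 set \<Rightarrow> mat3 set" where
  "argmax_on F X = {A \<in> X. \<forall>B\<in>X. F B \<le> F A}"

definition wellset :: "nat \<Rightarrow> (nat \<Rightarrow> mat3) \<Rightarrow> mat3 set" where
  "wellset l U = (\<Union>i\<in>{1..l}. (\<lambda>R. R ** U i) ` SO3)"

definition Rset :: "(mat3 \<Rightarrow> real) \<Rightarrow> mat3 \<Rightarrow> mat3 set" where
  "Rset F Uj = {R \<in> SO3. \<forall>R'\<in>SO3. F (R' ** Uj) \<le> F (R ** Uj)}"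

text \<open>Lambda: indices j with M = union over j in Lambda of R^j U_j\<close>
definition Lam :: "(mat3 \<Rightarrow> real) \<Rightarrow> nat \<Rightarrow> (nat \<Rightarrow> mat3) \<Rightarrow> nat set" where
  "Lam F l U = {j \<in> {1..l}. (\<lambda>R. R ** U j) ` Rset F (U j) \<subseteq> argmax_on F (wellset l U)}"

definition Tsp :: "(mat3 \<Rightarrow> real) \<Rightarrow> mat3 \<Rightarrow> mat3 \<Rightarrow> mat3 set" where
  "Tsp F Uj R = {R ** W | W. skew W \<and> F (R ** W ** W ** Uj) = 0}"

definition Nsp :: "(mat3 \<Rightarrow> real) \<Rightarrow> mat3 \<Rightarrow> mat3 \<Rightarrow> mat3 set" where
  "Nsp F Uj R = {R ** W | W. skew W \<and> (\<forall>V\<in>Tsp F Uj R. (R ** W) \<bullet> V = 0)}"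

end

theory Submission
  imports Defs
begin


definition ax :: "real^3 \<Rightarrow> mat3" where
  "ax w = vector [vector [0, -(w$3), w$2], vector [w$3, 0, -(w$1)], vector [-(w$2), w$1, 0]]"

definition qf :: "mat3 \<Rightarrow> real^3 \<Rightarrow> real" where
  "qf G w = w \<bullet> (G *v w) - (w \<bullet> w) * trace G"

lemmas bf = inner_vec_def sum_3 matrix_matrix_mult_def transpose_def vec_eq_iff forall_3
  matrix_vector_mult_def ax_def qf_def trace_def

lemma ax_sq: "(ax w ** ax w) \<bullet> G = qf G w"
  by (simp add: bf algebra_simps power2_eq_square)



lemma skew_entry: "skew W \<Longrightarrow> W$i$k = - W$k$i"
proof -
  assume "skew W"
  then have "(transpose W)$k$i = (-W)$k$i" unfolding skew_def by simp
  then show ?thesis by (simp add: transpose_def)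
qed
lemma skew_ax: "skew (ax w)"
  by (simp add: skew_def bf)
lemma skew_ex: "skew W \<Longrightarrow> W = ax (vector [W$3$2, W$1$3, W$2$1])"
proof -
  assume s: "skew W"
  note e = skew_entry[OF s]
  have d: "W$i$i = 0" for i using e[of i i] by simp
  show ?thesis
    unfolding ax_def vec_eq_iff forall_3 using d e[of 1 2] e[of 1 3] e[of 2 3] by simp
qed
lemma ax_comp: "(ax w)$3$2 = w$1" "(ax w)$1$3 = w$2" "(ax w)$2$1 = w$3"
  by (simp_all add: ax_def)
lemma inj_ax: "inj ax"
proof (rule injI)
  fix x y assume "ax x = ax y"
  then have "(ax x)$3$2 = (ax y)$3$2" "(ax x)$1$3 = (ax y)$1$3" "(ax x)$2$1 = (ax y)$2$1" by simp_all
  then show "x = y" by (simp add: ax_comp vec_eq_iff forall_3)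
qed
lemma linear_ax: "linear ax"
  by (rule linearI) (simp_all add: ax_def vec_eq_iff forall_3)
lemma inner_mat: "(A::real^'n^'m) \<bullet> B = (\<Sum>i\<in>UNIV. \<Sum>k\<in>UNIV. A$i$k * B$i$k)"
  by (simp add: inner_vec_def)

lemma sum3_swap: "(\<Sum>i\<in>UNIV. \<Sum>k\<in>UNIV. \<Sum>j\<in>UNIV. f i j k) = (\<Sum>j\<in>UNIV. \<Sum>k\<in>UNIV. \<Sum>i\<in>UNIV. (f i j k :: real))"
proof -
  have "(\<Sum>i\<in>UNIV. \<Sum>k\<in>UNIV. \<Sum>j\<in>UNIV. f i j k) = (\<Sum>i\<in>UNIV. \<Sum>j\<in>UNIV. \<Sum>k\<in>UNIV. f i j k)"
    by (rule sum.cong[OF refl], rule sum.swap)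
  also have "\<dots> = (\<Sum>j\<in>UNIV. \<Sum>i\<in>UNIV. \<Sum>k\<in>UNIV. f i j k)" by (rule sum.swap)
  also have "\<dots> = (\<Sum>j\<in>UNIV. \<Sum>k\<in>UNIV. \<Sum>i\<in>UNIV. f i j k)"
    by (rule sum.cong[OF refl], rule sum.swap)
  finally show ?thesis .
qed

lemma inner_mul_left: "((A::real^'n^'m) ** B) \<bullet> C = B \<bullet> (transpose A ** C)"
  unfolding inner_mat matrix_matrix_mult_def transpose_def
  apply (simp add: sum_distrib_left sum_distrib_right mult_ac)
  by (rule sum3_swap)

lemma inner_mul_right: "((B::real^'n^'m) ** U) \<bullet> C = B \<bullet> (C ** transpose U)"
  unfolding inner_mat matrix_matrix_mult_def transpose_def
  apply (simp add: sum_distrib_left sum_distrib_right mult_ac)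
  apply (rule sum.cong[OF refl])
  apply (rule sum.swap)
  done

definition Eab :: "real \<Rightarrow> real \<Rightarrow> real^3 \<Rightarrow> mat3" where
  "Eab a b k = mat 1 + a *\<^sub>R ax k + b *\<^sub>R (ax k ** ax k)"

lemma Eab_orth: assumes k: "k$1^2 + k$2^2 + k$3^2 = 1" and ab: "a^2 + b^2 = 2*b"
  shows "transpose (Eab a b k) ** Eab a b k = mat 1"
    unfolding Eab_def vec_eq_iff forall_3 
    apply (simp add: matrix_matrix_mult_def sum_3 ax_def transpose_def mat_def)
    using k ab apply -
    apply algebra+
    done

lemma Eab_orth2: assumes k: "k$1^2 + k$2^2 + k$3^2 = 1" and ab: "a^2 + b^2 = 2*b"
  shows "Eab a b k ** transpose (Eab a b k) = mat 1"
    unfolding Eab_def vec_eq_iff forall_3 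
    apply (simp add: matrix_matrix_mult_def sum_3 ax_def transpose_def mat_def)
    using k ab apply -
    apply algebra+
    done

lemma Eab_det: assumes k: "k$1^2 + k$2^2 + k$3^2 = 1" and ab: "a^2 + b^2 = 2*b"
  shows "det (Eab a b k) = 1"
    unfolding Eab_def det_3
    apply (simp add: matrix_matrix_mult_def sum_3 ax_def mat_def)
    using k ab apply -
    apply algebra
    done

lemma real_quad: fixes \<alpha> \<beta> :: real assumes "\<And>s. s * \<alpha> + s^2 * \<beta> \<le> 0"
  shows "\<alpha> = 0" "\<beta> \<le> 0"
proof -
  have b: "\<beta> \<le> 0" using assms[of 1] assms[of "-1"] by simp
  show "\<beta> \<le> 0" by fact
  show "\<alpha> = 0"
  proof (rule ccontr)
    assume a: "\<alpha> \<noteq> 0"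
    define s where "s = \<alpha> / (1 - \<beta>)"
    have nz: "1 - \<beta> \<noteq> 0" using b by simp
    have le: "s * \<alpha> + s^2 * \<beta> \<le> 0" by (rule assms)
    have sd: "s * (1-\<beta>) = \<alpha>" using nz by (simp add: s_def)
    have "(1-\<beta>)^2 * (s * \<alpha> + s^2 * \<beta>) = (1-\<beta>)*(s*(1-\<beta>))*\<alpha> + (s*(1-\<beta>))^2*\<beta>"
      by (simp add: power2_eq_square algebra_simps)
    also have "\<dots> = \<alpha>^2" unfolding sd by (simp add: power2_eq_square algebra_simps)
    finally have e: "(1-\<beta>)^2 * (s * \<alpha> + s^2 * \<beta>) = \<alpha>^2" .
    have "\<alpha>^2 > 0" using a by simp
    moreover have "(1-\<beta>)^2 * (s * \<alpha> + s^2 * \<beta>) \<le> 0"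
      using le by (simp add: mult_nonneg_nonpos)
    ultimately show False using e by simp
  qed
qed

lemma SO3_mul: "R \<in> SO3 \<Longrightarrow> E \<in> SO3 \<Longrightarrow> R ** E \<in> SO3"
  by (simp add: SO3_def rotation_matrix_def orthogonal_matrix_mul det_mul)

lemma Eab_SO3: assumes "k$1^2 + k$2^2 + k$3^2 = 1" "a^2 + b^2 = 2*b"
  shows "Eab a b k \<in> SO3"
  using Eab_orth[OF assms] Eab_orth2[OF assms] Eab_det[OF assms]
  by (simp add: SO3_def rotation_matrix_def orthogonal_matrix_def)

lemma inner_RU: "((R::mat3) ** E ** U) \<bullet> X = E \<bullet> (transpose R ** X ** transpose U)"
  by (rule trans[OF inner_mul_right], rule trans[OF inner_mul_left], simp add: matrix_mul_assoc)

lemma ax_scale: "ax (c *\<^sub>R k) = c *\<^sub>R ax k"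
  by (simp add: ax_def vec_eq_iff forall_3)

lemma opt_unit:
  assumes R: "R \<in> SO3" and mx: "\<forall>R'\<in>SO3. (R' ** U) \<bullet> X \<le> (R ** U) \<bullet> X"
    and k: "k$1^2 + k$2^2 + k$3^2 = 1"
  shows "ax k \<bullet> (transpose R ** X ** transpose U) = 0 \<and>
         (ax k ** ax k) \<bullet> (transpose R ** X ** transpose U) \<le> 0"
proof -
  define G where "G = transpose R ** X ** transpose U"
  have "s * (ax k \<bullet> G) + s^2 * ((ax k ** ax k) \<bullet> G) \<le> 0" for s
  proof -
    define c where "c = 1 + s^2"
    have c: "c > 0" unfolding c_def by (simp add: add_pos_nonneg)
    define a where "a = 2 * s / c"
    define b where "b = 2 * s^2 / c"
    have ac: "a * c = 2 * s" and bc: "b * c = 2 * s^2" using c by (simp_all add: a_def b_def)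
    have "(c*c) * (a^2 + b^2) = (a*c)^2 + (b*c)^2" by (simp add: power2_eq_square algebra_simps)
    also have "\<dots> = 4 * s^2 * c" by (simp only: ac bc) (simp add: c_def power2_eq_square algebra_simps)
    also have "\<dots> = (c*c) * (2*b)" using bc by (simp add: algebra_simps)
    finally have ab: "a^2 + b^2 = 2*b" using c by simp
    have "R ** Eab a b k \<in> SO3" by (rule SO3_mul[OF R Eab_SO3[OF k ab]])
    with mx have "(R ** Eab a b k ** U) \<bullet> X \<le> (R ** mat 1 ** U) \<bullet> X" by simp
    then have "Eab a b k \<bullet> G \<le> mat 1 \<bullet> G" unfolding inner_RU G_def .
    then have "a * (ax k \<bullet> G) + b * ((ax k ** ax k) \<bullet> G) \<le> 0"
      unfolding Eab_def by (simp add: inner_add_left)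
    then have "(c/2) * (a * (ax k \<bullet> G) + b * ((ax k ** ax k) \<bullet> G)) \<le> 0"
      using c by (simp add: mult_nonneg_nonpos)
    moreover have "(c/2) * (a * (ax k \<bullet> G) + b * ((ax k ** ax k) \<bullet> G)) =
       s * (ax k \<bullet> G) + s^2 * ((ax k ** ax k) \<bullet> G)"
      using c unfolding a_def b_def by (simp add: field_simps)
    ultimately show ?thesis by simp
  qed
  from real_quad[OF this] show ?thesis unfolding G_def by simp
qed

lemma opt_cond:
  assumes R: "R \<in> SO3" and mx: "\<forall>R'\<in>SO3. (R' ** U) \<bullet> X \<le> (R ** U) \<bullet> X"
  shows "ax k \<bullet> (transpose R ** X ** transpose U) = 0 \<and>
         (ax k ** ax k) \<bullet> (transpose R ** X ** transpose U) \<le> 0"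
proof (cases "k = 0")
  case True
  have "ax 0 = 0" by (simp add: ax_def vec_eq_iff forall_3)
  then show ?thesis using True by simp
next
  case False
  define u where "u = (1 / norm k) *\<^sub>R k"
  have nk: "norm k > 0" using False by simp
  have "norm u = 1" using nk by (simp add: u_def)
  then have "u \<bullet> u = 1" by (simp add: norm_eq_1)
  then have u1: "u$1^2 + u$2^2 + u$3^2 = 1" by (simp add: inner_vec_def sum_3 power2_eq_square)
  have ku: "k = norm k *\<^sub>R u" using nk by (simp add: u_def)
  have "ax k = norm k *\<^sub>R ax u" by (subst ku, rule ax_scale)
  then have e1: "ax k = norm k *\<^sub>R ax u" and e2: "ax k ** ax k = (norm k * norm k) *\<^sub>R (ax u ** ax u)"
    by (simp_all add: matrix_scalar_ac scalar_matrix_assoc[symmetric])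
  define G where "G = transpose R ** X ** transpose U"
  have g1: "ax k \<bullet> G = norm k * (ax u \<bullet> G)" using e1 by simp
  have g2: "(ax k ** ax k) \<bullet> G = (norm k * norm k) * ((ax u ** ax u) \<bullet> G)" using e2 by simp
  from opt_unit[OF R mx u1] show ?thesis
    unfolding G_def[symmetric] g1 g2 by (simp add: mult_nonneg_nonpos)
qed

lemma inner_mv: "((A::real^'n^'m) *v x) \<bullet> y = x \<bullet> (transpose A *v y)"
  by (metis dot_lmul_matrix vector_transpose_matrix)

lemma orth_inner: "orthogonal_matrix (P::real^'n^'n) \<Longrightarrow> (P *v x) \<bullet> (P *v y) = x \<bullet> y"
  by (simp add: inner_mv matrix_vector_mul_assoc orthogonal_matrix)

lemma qf_orth: assumes "orthogonal_matrix P"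
  shows "qf (transpose P ** G ** P) w = qf G (P *v w)"
proof -
  have "w \<bullet> ((transpose P ** G ** P) *v w) = (P *v w) \<bullet> (G *v (P *v w))"
    by (simp add: inner_mv matrix_vector_mul_assoc matrix_mul_assoc)
  moreover have "trace (transpose P ** G ** P) = trace G"
    using assms by (metis matrix_mul_assoc matrix_mul_rid orthogonal_matrix_def trace_mul_sym)
  moreover have "w \<bullet> w = (P *v w) \<bullet> (P *v w)" using orth_inner[OF assms] by simp
  ultimately show ?thesis by (simp add: qf_def)
qed

definition R1 :: "mat3 \<Rightarrow> bool" where
  "R1 X \<longleftrightarrow> (\<exists>y. \<forall>w. \<exists>t. X *v w = t *\<^sub>R y)"

lemma R1_mul: "R1 X \<Longrightarrow> R1 (A ** X ** B)"
proof -
  assume "R1 X"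
  then obtain y where y: "\<forall>w. \<exists>t. X *v w = t *\<^sub>R y" unfolding R1_def by blast
  have "\<exists>t. (A ** X ** B) *v w = t *\<^sub>R (A *v y)" for w
  proof -
    obtain t where "X *v (B *v w) = t *\<^sub>R y" using y by blast
    then have "(A ** X ** B) *v w = t *\<^sub>R (A *v y)"
      by (simp add: matrix_vector_mul_assoc[symmetric] matrix_vector_mult_scaleR)
    then show ?thesis by blast
  qed
  then show ?thesis unfolding R1_def by blast
qed

lemma G_sym:
  assumes "\<And>k. ax k \<bullet> G = 0"
  shows "transpose G = G"
proof -
  have "ax (axis i 1) \<bullet> G = 0" for i by (rule assms)
  from this[of 1] this[of 2] this[of 3] show ?thesis
    by (simp add: ax_def axis_def inner_vec_def sum_3 transpose_def vec_eq_iff forall_3)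
qed

definition Qf :: "real \<Rightarrow> real \<Rightarrow> real \<Rightarrow> real^3 \<Rightarrow> real" where
  "Qf a b c w = -(a+c)*(w$1)^2 - c*(w$2)^2 + 2*b*(w$2)*(w$3) - a*(w$3)^2"

lemma qf_explicit:
  assumes "G$1$1 = 0" "G$1$2 = 0" "G$1$3 = 0" "G$2$1 = 0" "G$3$1 = 0" "G$3$2 = G$2$3"
  shows "qf G w = Qf (G$2$2) (G$2$3) (G$3$3) w"
  using assms by (simp add: qf_def Qf_def inner_vec_def matrix_vector_mult_def sum_3 trace_def
      power2_eq_square algebra_simps)

lemma Qf_coef:
  assumes "\<And>w. Qf a b c w \<le> 0"
  shows "a \<ge> 0" "c \<ge> 0" "a*c \<ge> b^2"
proof -
  have "Qf a b c (vector [0,0,1]) \<le> 0" by (rule assms)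
  then show a: "a \<ge> 0" by (simp add: Qf_def)
  have "Qf a b c (vector [0,1,0]) \<le> 0" by (rule assms)
  then show c: "c \<ge> 0" by (simp add: Qf_def)
  have 1: "Qf a b c (vector [0,b,c]) \<le> 0" by (rule assms)
  have 2: "Qf a b c (vector [0,a,b]) \<le> 0" by (rule assms)
  have 3: "Qf a b c (vector [0,1,1]) \<le> 0" by (rule assms)
  have 4: "Qf a b c (vector [0,1,-1]) \<le> 0" by (rule assms)
  have e1: "Qf a b c (vector [0,b,c]) = c * (b^2 - a*c)" by (simp add: Qf_def power2_eq_square algebra_simps)
  have e2: "Qf a b c (vector [0,a,b]) = a * (b^2 - a*c)" by (simp add: Qf_def power2_eq_square algebra_simps)
  show "a*c \<ge> b^2"
  proof (cases "c > 0")
    case True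
    then show ?thesis using 1 e1 by (simp add: mult_le_0_iff)
  next
    case False
    then have c0: "c = 0" using c by simp
    show ?thesis
    proof (cases "a > 0")
      case True
      then show ?thesis using 2 e2 by (simp add: mult_le_0_iff)
    next
      case False
      then have "a = 0" using a by simp
      then have "b = 0" using 3 4 c0 by (simp add: Qf_def)
      then show ?thesis using c0 by simp
    qed
  qed
qed

lemma Qf_full:
  assumes "a*c > b^2" "a \<ge> 0" "c \<ge> 0" "Qf a b c w = 0"
  shows "w = 0"
proof -
  have c: "c > 0" using assms(1-3) by (metis zero_le_power2 mult_zero_right not_le order.not_eq_order_implies_strict)
  have a: "a > 0" using assms(1-3) by (metis zero_le_power2 mult_zero_left not_le order.not_eq_order_implies_strict)
  define q where "q = c*(w$2)^2 - 2*b*(w$2)*(w$3) + a*(w$3)^2"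
  have cq: "c * q = (c*(w$2) - b*(w$3))^2 + (a*c - b^2)*(w$3)^2"
    by (simp add: q_def power2_eq_square algebra_simps)
  have q0: "q \<ge> 0"
  proof -
    have "c * q \<ge> 0" unfolding cq using assms(1) by (simp add: add_nonneg_nonneg)
    then show ?thesis using c by (simp add: zero_le_mult_iff)
  qed
  have "(a+c)*(w$1)^2 + q = 0" using assms(4) by (simp add: Qf_def q_def algebra_simps)
  moreover have "(a+c)*(w$1)^2 \<ge> 0" using a c by simp
  ultimately have w1: "(a+c)*(w$1)^2 = 0" and qz: "q = 0" using q0 by linarith+
  from w1 a c have 1: "w$1 = 0" by simp
  have "(c*(w$2) - b*(w$3))^2 + (a*c - b^2)*(w$3)^2 = 0" using qz cq by simp
  moreover have "(a*c - b^2)*(w$3)^2 \<ge> 0" using assms(1) by simp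
  ultimately have "(a*c - b^2)*(w$3)^2 = 0" "(c*(w$2) - b*(w$3))^2 = 0"
    by (smt (verit) zero_le_power2)+
  then have 3: "w$3 = 0" and "c*(w$2) - b*(w$3) = 0" using assms(1) by simp_all
  then have 2: "w$2 = 0" using c by simp
  show ?thesis using 1 2 3 by (simp add: vec_eq_iff forall_3)
qed

lemma Qf_rank1:
  assumes "a*c = b^2" "a \<ge> 0" "c \<ge> 0" "a + c > 0"
  shows "\<exists>u. u \<noteq> 0 \<and> {w. Qf a b c w = 0} = range (\<lambda>t. t *\<^sub>R u)"
proof (cases "c > 0")
  case True
  define u :: "real^3" where "u = vector [0, b, c]"
  have "u \<noteq> 0" using True by (simp add: u_def vec_eq_iff forall_3)
  moreover have "{w. Qf a b c w = 0} = range (\<lambda>t. t *\<^sub>R u)"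
  proof (intro set_eqI iffI)
    fix w assume "w \<in> {w. Qf a b c w = 0}"
    then have z: "Qf a b c w = 0" by simp
    define q where "q = c*(w$2)^2 - 2*b*(w$2)*(w$3) + a*(w$3)^2"
    have cq: "c * q = (c*(w$2) - b*(w$3))^2"
      using assms(1) by (simp add: q_def power2_eq_square algebra_simps)
    have q0: "q \<ge> 0"
    proof -
      have "c * q \<ge> 0" unfolding cq by simp
      then show ?thesis using True by (simp add: zero_le_mult_iff)
    qed
    have "(a+c)*(w$1)^2 + q = 0" using z by (simp add: Qf_def q_def algebra_simps)
    moreover have "(a+c)*(w$1)^2 \<ge> 0" using assms by simp
    ultimately have w1: "(a+c)*(w$1)^2 = 0" and qz: "q = 0" using q0 by linarith+
    from w1 assms(4) have 1: "w$1 = 0" by simp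
    have "c*(w$2) - b*(w$3) = 0" using qz cq by simp
    then have 2: "w$2 = (w$3/c) * b" using True by (simp add: field_simps)
    have "w = (w$3/c) *\<^sub>R u"
      using 1 2 True by (simp add: u_def vec_eq_iff forall_3)
    then show "w \<in> range (\<lambda>t. t *\<^sub>R u)" by blast
  next
    fix w assume "w \<in> range (\<lambda>t. t *\<^sub>R u)"
    then obtain t where "w = t *\<^sub>R u" by blast
    then show "w \<in> {w. Qf a b c w = 0}"
      using assms(1) by (simp add: Qf_def u_def power2_eq_square algebra_simps)
  qed
  ultimately show ?thesis by blast
next
  case False
  then have c0: "c = 0" using assms(3) by simp
  then have b0: "b = 0" using assms(1) by simp
  have a0: "a > 0" using assms(4) c0 by simp
  define u :: "real^3" where "u = vector [0, 1, 0]"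
  have "u \<noteq> 0" by (simp add: u_def vec_eq_iff forall_3)
  moreover have "{w. Qf a b c w = 0} = range (\<lambda>t. t *\<^sub>R u)"
  proof (intro set_eqI iffI)
    fix w assume "w \<in> {w. Qf a b c w = 0}"
    then have z: "a * ((w$1)^2 + (w$3)^2) = 0" using b0 c0 by (simp add: Qf_def algebra_simps)
    then have "(w$1)^2 + (w$3)^2 = 0" using a0 by simp
    then have "w$1 = 0" "w$3 = 0" by (simp_all add: sum_power2_eq_zero_iff)
    then have "w = (w$2) *\<^sub>R u" by (simp add: u_def vec_eq_iff forall_3)
    then show "w \<in> range (\<lambda>t. t *\<^sub>R u)" by blast
  next
    fix w assume "w \<in> range (\<lambda>t. t *\<^sub>R u)"
    then obtain t where "w = t *\<^sub>R u" by blast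
    then show "w \<in> {w. Qf a b c w = 0}"
      using b0 c0 by (simp add: Qf_def u_def)
  qed
  ultimately show ?thesis by blast
qed

lemma R1_block:
  assumes "G$1$1 = 0" "G$1$2 = 0" "G$1$3 = 0" "G$2$1 = 0" "G$3$1 = 0" "G$3$2 = G$2$3"
    and a: "G$2$2 \<ge> 0"
  shows "R1 G \<longleftrightarrow> G$2$2 * G$3$3 = (G$2$3)^2"
proof -
  define a b c where "a = G$2$2" "b = G$2$3" "c = G$3$3"
  have Gw: "G *v w = vector [0, a*(w$2) + b*(w$3), b*(w$2) + c*(w$3)]" for w
    using assms unfolding a_b_c_def
    by (simp add: matrix_vector_mult_def sum_3 vec_eq_iff forall_3 algebra_simps)
  show ?thesis
  proof
    assume "R1 G"
    then obtain y where y: "\<forall>w. \<exists>t. G *v w = t *\<^sub>R y" unfolding R1_def by blast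
    obtain t1 where t1: "G *v (vector [0,1,0]) = t1 *\<^sub>R y" using y by blast
    obtain t2 where t2: "G *v (vector [0,0,1]) = t2 *\<^sub>R y" using y by blast
    have "a = t1 * y$2" "b = t1 * y$3" using t1 unfolding Gw by (simp_all add: vec_eq_iff forall_3)
    moreover have "b = t2 * y$2" "c = t2 * y$3" using t2 unfolding Gw by (simp_all add: vec_eq_iff forall_3)
    ultimately have "a * c = b^2" by (simp add: power2_eq_square algebra_simps)
    then show "G$2$2 * G$3$3 = (G$2$3)^2" unfolding a_b_c_def .
  next
    assume "G$2$2 * G$3$3 = (G$2$3)^2"
    then have ac: "a * c = b^2" unfolding a_b_c_def .
    show "R1 G"
    proof (cases "a > 0")
      case True
      have "G *v w = ((a*(w$2) + b*(w$3))/a) *\<^sub>R vector [0, a, b]" for w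
      proof -
        have "b * (w$2) + c * (w$3) = ((a*(w$2) + b*(w$3))/a) * b"
          using True ac by (simp add: field_simps power2_eq_square)
        then show ?thesis unfolding Gw using True by (simp add: vec_eq_iff forall_3)
      qed
      then show ?thesis unfolding R1_def by blast
    next
      case False
      then have "a = 0" using a a_b_c_def by simp
      then have "b = 0" using ac by simp
      have "G *v w = (w$3) *\<^sub>R vector [0, 0, c]" for w
        unfolding Gw using \<open>a = 0\<close> \<open>b = 0\<close> by (simp add: vec_eq_iff forall_3)
      then show ?thesis unfolding R1_def by blast
    qed
  qed
qed

definition Zs :: "mat3 \<Rightarrow> mat3 \<Rightarrow> mat3 \<Rightarrow> mat3 set" where
  "Zs X U R = {W. skew W \<and> (R ** W ** W ** U) \<bullet> X = 0}"

lemma R1_cancel: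
  assumes "R1 (A ** X ** B)" "A' ** A = mat 1" "B ** B' = mat 1"
  shows "R1 X"
proof -
  have "A' ** (A ** X ** B) ** B' = (A' ** A) ** X ** (B ** B')" by (simp add: matrix_mul_assoc)
  then have "A' ** (A ** X ** B) ** B' = X" using assms by simp
  then show ?thesis using R1_mul[OF assms(1), of A' B'] by simp
qed

lemma zero_cancel:
  assumes "A ** X ** B = 0" "A' ** A = mat 1" "B ** B' = mat 1"
  shows "X = 0"
proof -
  have "A' ** (A ** X ** B) ** B' = (A' ** A) ** X ** (B ** B')" by (simp add: matrix_mul_assoc)
  then show ?thesis using assms by simp
qed

lemma Zs_ax: "Zs X U R = ax ` {w. qf (transpose R ** X ** transpose U) w = 0}"
proof -
  have e: "(R ** W ** W ** U) \<bullet> X = (W ** W) \<bullet> (transpose R ** X ** transpose U)" for W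
    using inner_RU[of R "W ** W" U X] by (simp add: matrix_mul_assoc)
  show ?thesis
  proof (intro set_eqI iffI)
    fix W assume "W \<in> Zs X U R"
    then have s: "skew W" and z: "(R ** W ** W ** U) \<bullet> X = 0" unfolding Zs_def by auto
    obtain w where w: "W = ax w" using skew_ex[OF s] by blast
    then show "W \<in> ax ` {w. qf (transpose R ** X ** transpose U) w = 0}"
      using z unfolding e w ax_sq by blast
  next
    fix W assume "W \<in> ax ` {w. qf (transpose R ** X ** transpose U) w = 0}"
    then obtain w where "W = ax w" "qf (transpose R ** X ** transpose U) w = 0" by blast
    then show "W \<in> Zs X U R" unfolding Zs_def using e ax_sq skew_ax by auto
  qed
qed

declare transpose_matrix_vector[simp del]

lemma col1: "((A::mat3) *v axis 1 1)$i = A$i$1"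
  by (simp add: matrix_vector_mult_def axis_def sum_3 exhaust_3)

lemma classify:
  assumes U: "invertible U" and R: "R \<in> SO3"
    and mx: "\<forall>R'\<in>SO3. (R' ** U) \<bullet> X \<le> (R ** U) \<bullet> X" and X3: "X *v axis 3 1 = 0"
  shows "\<not> R1 X \<Longrightarrow> Zs X U R = {0}"
    and "X \<noteq> 0 \<Longrightarrow> R1 X \<Longrightarrow> \<exists>K. skew K \<and> K \<noteq> 0 \<and> Zs X U R = range (\<lambda>t. t *\<^sub>R K)"
proof -
  define G where "G = transpose R ** X ** transpose U"
  have oc: "ax k \<bullet> G = 0 \<and> (ax k ** ax k) \<bullet> G \<le> 0" for k
    using opt_cond[OF R mx] unfolding G_def by blast
  have symG: "transpose G = G" by (rule G_sym) (use oc in blast)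
  have qG: "qf G w \<le> 0" for w using oc[of w] ax_sq by simp
  obtain U' where U': "transpose U ** U' = mat 1" "U' ** transpose U = mat 1"
    using transpose_invertible[OF U] unfolding invertible_def by blast
  define v where "v = U' *v axis 3 1"
  have Uv: "transpose U *v v = axis 3 1"
    unfolding v_def by (simp add: matrix_vector_mul_assoc U')
  have v0: "v \<noteq> 0" using Uv by (metis axis_nth matrix_vector_mult_0_right zero_index zero_neq_one)
  have "G *v v = transpose R *v (X *v (transpose U *v v))"
    unfolding G_def by (simp only: matrix_vector_mul_assoc matrix_mul_assoc)
  then have Gv: "G *v v = 0" by (simp only: Uv X3 matrix_vector_mult_0_right)
  have ROrth: "orthogonal_matrix R" using R by (simp add: SO3_def rotation_matrix_def)
  obtain P where P: "rotation_matrix P" "P *v axis 1 1 = (1 / norm v) *\<^sub>R v"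
    using rotation_matrix_exists_basis[of "(1 / norm v) *\<^sub>R v" 1] v0 by auto
  have PO: "orthogonal_matrix P" using P by (simp add: rotation_matrix_def)
  define G' where "G' = transpose P ** G ** P"
  have G'1: "G' *v axis 1 1 = 0"
    unfolding G'_def using P(2) Gv
    by (simp add: matrix_vector_mul_assoc[symmetric] matrix_vector_mult_scaleR)
  have symG': "transpose G' = G'"
    unfolding G'_def by (simp add: matrix_transpose_mul symG matrix_mul_assoc)
  have c1: "G'$i$1 = 0" for i using col1[of G' i] G'1 by simp
  have r1: "G'$1$i = 0" for i
  proof -
    have "G'$1$i = (transpose G')$i$1" by (simp add: transpose_def)
    then show ?thesis using symG' c1 by simp
  qed
  have shape: "G'$1$1 = 0" "G'$1$2 = 0" "G'$1$3 = 0" "G'$2$1 = 0" "G'$3$1 = 0" "G'$3$2 = G'$2$3"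
  proof -
    have "(transpose G')$3$2 = G'$3$2" using symG' by simp
    then show "G'$1$1 = 0" "G'$1$2 = 0" "G'$1$3 = 0" "G'$2$1 = 0" "G'$3$1 = 0" "G'$3$2 = G'$2$3"
      using c1 r1 by (simp_all add: transpose_def)
  qed
  define a b c where "a = G'$2$2" "b = G'$2$3" "c = G'$3$3"
  have qG': "qf G' w = qf G (P *v w)" for w unfolding G'_def by (rule qf_orth[OF PO])
  have Qle: "Qf a b c w \<le> 0" for w
    using qG'[of w] qG[of "P *v w"] qf_explicit[OF shape, of w] unfolding a_b_c_def by simp
  note coef = Qf_coef[OF Qle]
  have PPt: "P ** transpose P = mat 1" "transpose P ** P = mat 1" using PO by (simp_all add: orthogonal_matrix_def)
  have RRt: "R ** transpose R = mat 1" using ROrth by (simp add: orthogonal_matrix_def)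
  have G'eq: "G' = (transpose P ** transpose R) ** X ** (transpose U ** P)"
    unfolding G'_def G_def by (simp add: matrix_mul_assoc)
  have inv1: "(R ** P) ** (transpose P ** transpose R) = mat 1"
    by (metis PPt(1) RRt matrix_mul_assoc matrix_mul_rid)
  have inv2: "(transpose U ** P) ** (transpose P ** U') = mat 1"
    by (metis PPt(1) U'(1) matrix_mul_assoc matrix_mul_rid)
  have R1iff: "R1 G' \<longleftrightarrow> R1 X"
  proof
    assume "R1 G'"
    then show "R1 X" using R1_cancel[OF _ inv1 inv2] G'eq by simp
  next
    assume "R1 X"
    then show "R1 G'" using R1_mul G'eq by simp
  qed
  have X0iff: "G' = 0 \<longleftrightarrow> X = 0"
    using zero_cancel[OF _ inv1 inv2] G'eq by auto
  have R1G': "R1 G' \<longleftrightarrow> a * c = b^2"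
    unfolding a_b_c_def by (rule R1_block[OF shape]) (use coef(1) a_b_c_def in simp)
  have Zs_eq: "Zs X U R = ax ` ((\<lambda>w. P *v w) ` {w. Qf a b c w = 0})"
  proof -
    have "{w. qf G w = 0} = (\<lambda>w. P *v w) ` {w. Qf a b c w = 0}"
    proof (intro set_eqI iffI)
      fix w assume "w \<in> {w. qf G w = 0}"
      moreover have "P *v (transpose P *v w) = w" by (simp add: matrix_vector_mul_assoc PPt)
      moreover have "Qf a b c (transpose P *v w) = qf G (P *v (transpose P *v w))"
        using qG'[of "transpose P *v w"] qf_explicit[OF shape, of "transpose P *v w"]
        unfolding a_b_c_def by simp
      ultimately have "Qf a b c (transpose P *v w) = 0" by simp
      then show "w \<in> (\<lambda>w. P *v w) ` {w. Qf a b c w = 0}"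
        using \<open>P *v (transpose P *v w) = w\<close> by (metis (mono_tags, lifting) image_eqI mem_Collect_eq)
    next
      fix w assume "w \<in> (\<lambda>w. P *v w) ` {w. Qf a b c w = 0}"
      then obtain w' where "w = P *v w'" "Qf a b c w' = 0" by blast
      then show "w \<in> {w. qf G w = 0}"
        using qG'[of w'] qf_explicit[OF shape, of w'] unfolding a_b_c_def by simp
    qed
    then show ?thesis unfolding Zs_ax G_def[symmetric] by simp
  qed
  show "Zs X U R = {0}" if "\<not> R1 X"
  proof -
    have "a * c \<noteq> b^2" using that R1iff R1G' by simp
    then have gt: "a * c > b^2" using coef(3) by simp
    have "{w. Qf a b c w = 0} = {0}"
      using Qf_full[OF gt coef(1,2)] by (auto simp: Qf_def)
    moreover have "ax 0 = 0" by (simp add: ax_def vec_eq_iff forall_3)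
    ultimately show ?thesis unfolding Zs_eq by simp
  qed
  show "\<exists>K. skew K \<and> K \<noteq> 0 \<and> Zs X U R = range (\<lambda>t. t *\<^sub>R K)" if "X \<noteq> 0" "R1 X"
  proof -
    have ac: "a * c = b^2" using that R1iff R1G' by simp
    have "G' \<noteq> 0" using that X0iff by simp
    have apc: "a + c > 0"
    proof (rule ccontr)
      assume "\<not> a + c > 0"
      then have "a = 0" "c = 0" using coef(1,2) by simp_all
      then have "b = 0" using ac by simp
      then have "G' = 0" using shape \<open>a = 0\<close> \<open>c = 0\<close> unfolding a_b_c_def
        by (simp add: vec_eq_iff forall_3)
      with \<open>G' \<noteq> 0\<close> show False by simp
    qed
    obtain u where u: "u \<noteq> 0" "{w. Qf a b c w = 0} = range (\<lambda>t. t *\<^sub>R u)"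
      using Qf_rank1[OF ac coef(1,2) apc] by blast
    define K where "K = ax (P *v u)"
    have "P *v u \<noteq> 0"
    proof
      assume "P *v u = 0"
      then have "transpose P *v (P *v u) = 0" by simp
      then show False using u(1) by (simp add: matrix_vector_mul_assoc PPt)
    qed
    moreover have "ax 0 = 0" by (simp add: ax_def vec_eq_iff forall_3)
    ultimately have "K \<noteq> 0" unfolding K_def using inj_ax by (metis injD)
    moreover have "Zs X U R = range (\<lambda>t. t *\<^sub>R K)"
      unfolding Zs_eq u(2) K_def image_image
      by (simp add: matrix_vector_mult_scaleR ax_scale)
    ultimately show ?thesis using skew_ax K_def by blast
  qed
qed

lemma tendsto_mmult:
  fixes A B :: "'x \<Rightarrow> real^'n^'n"
  assumes "(A \<longlongrightarrow> a) F" "(B \<longlongrightarrow> b) F"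
  shows "((\<lambda>x. A x ** B x) \<longlongrightarrow> a ** b) F"
  unfolding matrix_matrix_mult_def
  apply (rule vec_tendstoI)
  apply (simp only: vec_lambda_beta)
  apply (rule vec_tendstoI)
  apply (simp only: vec_lambda_beta)
  apply (rule tendsto_sum)
  apply (rule tendsto_mult)
   apply (rule tendsto_vec_nth, rule tendsto_vec_nth, rule assms)
  apply (rule tendsto_vec_nth, rule tendsto_vec_nth, rule assms)
  done
lemma tendsto_transpose:
  fixes A :: "'x \<Rightarrow> real^'n^'n"
  assumes "(A \<longlongrightarrow> a) F"
  shows "((\<lambda>x. transpose (A x)) \<longlongrightarrow> transpose a) F"
  unfolding transpose_def
  apply (rule vec_tendstoI)
  apply (simp only: vec_lambda_beta)
  apply (rule vec_tendstoI)
  apply (simp only: vec_lambda_beta)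
  apply (rule tendsto_vec_nth, rule tendsto_vec_nth, rule assms)
  done

lemma tendsto_det3:
  fixes A :: "'x \<Rightarrow> mat3"
  assumes "(A \<longlongrightarrow> a) F"
  shows "((\<lambda>x. det (A x)) \<longlongrightarrow> det a) F"
proof -
  have c: "((\<lambda>x. A x $ i $ j) \<longlongrightarrow> a $ i $ j) F" for i j
    by (rule tendsto_vec_nth, rule tendsto_vec_nth, rule assms)
  show ?thesis unfolding det_3
    by (intro tendsto_add tendsto_diff tendsto_mult c)
qed

lemma SO3_closed: "closed SO3"
proof (unfold closed_sequential_limits, intro allI impI, elim conjE)
  fix f :: "nat \<Rightarrow> mat3" and l assume f: "\<forall>n. f n \<in> SO3" "f \<longlonglongrightarrow> l"
  have "(\<lambda>n. transpose (f n) ** f n) \<longlonglongrightarrow> transpose l ** l"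
    by (intro tendsto_mmult tendsto_transpose f(2))
  moreover have "(\<lambda>n. transpose (f n) ** f n) = (\<lambda>n. mat 1)"
    using f(1) by (simp add: SO3_def rotation_matrix_def orthogonal_matrix)
  ultimately have "(\<lambda>n. mat 1) \<longlonglongrightarrow> transpose l ** l" by simp
  then have 1: "transpose l ** l = mat 1" by (rule LIMSEQ_unique[OF tendsto_const, symmetric])
  have "(\<lambda>n. det (f n)) \<longlonglongrightarrow> det l" by (intro tendsto_det3 f(2))
  moreover have "(\<lambda>n. det (f n)) = (\<lambda>n. 1)"
    using f(1) by (simp add: SO3_def rotation_matrix_def)
  ultimately have "(\<lambda>n. 1) \<longlonglongrightarrow> det l" by simp
  then have 2: "det l = 1" by (rule LIMSEQ_unique[OF tendsto_const, symmetric])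
  show "l \<in> SO3" using 1 2 by (simp add: SO3_def rotation_matrix_def orthogonal_matrix)
qed

lemma SO3_bounded: "bounded SO3"
proof -
  have "norm R \<le> 3" if "R \<in> SO3" for R
  proof -
    have o: "orthogonal_matrix R" using that by (simp add: SO3_def rotation_matrix_def)
    have "norm (R$i) = 1" for i
    proof -
      have "norm (row i R) = 1" using o orthogonal_matrix_orthonormal_rows by blast
      moreover have "row i R = R$i" by (simp add: row_def vec_eq_iff)
      ultimately show ?thesis by simp
    qed
    have "norm R = L2_set (\<lambda>i. norm (R$i)) UNIV" by (rule norm_vec_def)
    also have "\<dots> \<le> (\<Sum>i\<in>UNIV. norm (R$i))" by (rule L2_set_le_sum) simp
    finally have "norm R \<le> (\<Sum>i\<in>UNIV. norm (R$i))" .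
    also have "\<dots> = 3" using \<open>\<And>i. norm (R$i) = 1\<close> by simp
    finally show ?thesis .
  qed
  then show ?thesis unfolding bounded_iff by blast
qed


lemma SO3_compact: "compact SO3"
  using SO3_closed SO3_bounded compact_eq_bounded_closed by blast

lemma SO3_ne: "mat 1 \<in> SO3"
  by (simp add: SO3_def rotation_matrix_def orthogonal_matrix_id)

lemma cont_RU: "continuous_on S (\<lambda>R::mat3. (R ** (U::mat3)) \<bullet> (X::mat3))"
proof -
  have "continuous_on S (\<lambda>R::mat3. R ** U)"
    unfolding continuous_on_def
  proof
    fix x show "((\<lambda>R. R ** U) \<longlongrightarrow> x ** U) (at x within S)"
      apply (rule tendsto_mmult)
      apply (rule tendsto_ident_at)
      by (rule tendsto_const)
  qed
  then show ?thesis by (intro continuous_on_inner continuous_on_const)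
qed

lemma Rset_ne: "\<exists>R. R \<in> Rset (\<lambda>A. A \<bullet> X) U"
proof -
  obtain R where "R \<in> SO3" "\<forall>R'\<in>SO3. (R' ** U) \<bullet> X \<le> (R ** U) \<bullet> X"
    using continuous_attains_sup[OF SO3_compact _ cont_RU] SO3_ne by blast
  then show ?thesis unfolding Rset_def by blast
qed


lemma Tsp_eq: "Tsp (\<lambda>A. A \<bullet> X) U R = (\<lambda>W. R ** W) ` Zs X U R"
  unfolding Tsp_def Zs_def by auto

lemma linear_lmul: "linear (\<lambda>W::mat3. R ** W)"
  by (rule linearI) (simp_all add: matrix_add_ldistrib matrix_scalar_ac scalar_matrix_assoc)

lemma SO3_orth: "R \<in> SO3 \<Longrightarrow> transpose R ** R = mat 1 \<and> R ** transpose R = mat 1"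
  by (simp add: SO3_def rotation_matrix_def orthogonal_matrix_def)

lemma inj_lmul: "R \<in> SO3 \<Longrightarrow> inj (\<lambda>W::mat3. R ** W)"
proof (rule injI)
  fix x y assume R: "R \<in> SO3" and "R ** x = R ** y"
  then have "transpose R ** (R ** x) = transpose R ** (R ** y)" by simp
  then show "x = y" using SO3_orth[OF R] by (simp add: matrix_mul_assoc)
qed

lemma dim_lmul: "R \<in> SO3 \<Longrightarrow> dim ((\<lambda>W::mat3. R ** W) ` S) = dim S"
  by (rule dim_image_eq[OF linear_lmul]) (use inj_lmul in \<open>auto intro: inj_on_subset\<close>)

lemma dim_skew: "dim {W::mat3. skew W} = 3"
proof -
  have "{W::mat3. skew W} = range ax" using skew_ax skew_ex by blast
  then have "dim {W::mat3. skew W} = dim (UNIV :: (real^3) set)"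
    using dim_image_eq[OF linear_ax, of UNIV] inj_ax by (simp add: inj_on_def)
  then show ?thesis by simp
qed

lemma dim_line: "K \<noteq> 0 \<Longrightarrow> dim (range (\<lambda>t. t *\<^sub>R (K::mat3))) = 1"
proof -
  assume "K \<noteq> 0"
  have "range (\<lambda>t. t *\<^sub>R K) = span {K}" by (simp add: span_singleton)
  then show ?thesis using \<open>K \<noteq> 0\<close> by simp
qed

definition cls :: "mat3 \<Rightarrow> nat" where
  "cls X = (if X = 0 then 3 else if R1 X then 1 else 0)"

lemma dim_Tsp:
  assumes U: "invertible U" and R: "R \<in> Rset (\<lambda>A. A \<bullet> X) U" and X3: "X *v axis 3 1 = 0"
  shows "dim (Tsp (\<lambda>A. A \<bullet> X) U R) = cls X"
proof -
  have R': "R \<in> SO3" and mx: "\<forall>R'\<in>SO3. (R' ** U) \<bullet> X \<le> (R ** U) \<bullet> X"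
    using R unfolding Rset_def by auto
  have d: "dim (Tsp (\<lambda>A. A \<bullet> X) U R) = dim (Zs X U R)"
    unfolding Tsp_eq by (rule dim_lmul[OF R'])
  show ?thesis
  proof (cases "X = 0")
    case True
    then have "Zs X U R = {W. skew W}" by (simp add: Zs_def)
    then show ?thesis using d dim_skew True by (simp add: cls_def)
  next
    case False
    show ?thesis
    proof (cases "R1 X")
      case True
      obtain K where "skew K" "K \<noteq> 0" "Zs X U R = range (\<lambda>t. t *\<^sub>R K)"
        using classify(2)[OF U R' mx X3 False True] by blast
      then show ?thesis using d dim_line False True by (simp add: cls_def)
    next
      case nr: False
      have "Zs X U R = {0}" using classify(1)[OF U R' mx X3 nr] .
      then show ?thesis using d False nr by (simp add: cls_def)
    qed
  qed
qed


lemma inner_lmul_orth: "R \<in> SO3 \<Longrightarrow> (R ** A) \<bullet> (R ** B) = A \<bullet> (B::mat3)"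
  using SO3_orth[of R] by (simp add: inner_mul_left matrix_mul_assoc)

lemma Nsp_orth:
  assumes R: "R \<in> SO3" and N: "R ** W \<in> Nsp (\<lambda>A. A \<bullet> X) U R" and W': "W' \<in> Zs X U R"
  shows "W \<bullet> W' = 0"
proof -
  obtain W'' where e: "R ** W = R ** W''" and o: "\<forall>V\<in>Tsp (\<lambda>A. A \<bullet> X) U R. (R ** W'') \<bullet> V = 0"
    using N unfolding Nsp_def by blast
  have "W = W''" using e inj_lmul[OF R] by (simp add: inj_on_def)
  moreover have "R ** W' \<in> Tsp (\<lambda>A. A \<bullet> X) U R" unfolding Tsp_eq using W' by blast
  ultimately have "(R ** W) \<bullet> (R ** W') = 0" using o by simp
  then show ?thesis using inner_lmul_orth[OF R] by simp
qed

lemma Nsp_intro: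
  assumes R: "R \<in> SO3" and W: "skew W" and o: "\<forall>W'\<in>Zs X U R. W \<bullet> W' = 0"
  shows "R ** W \<in> Nsp (\<lambda>A. A \<bullet> X) U R"
proof -
  have "\<forall>V\<in>Tsp (\<lambda>A. A \<bullet> X) U R. (R ** W) \<bullet> V = 0"
    unfolding Tsp_eq using o inner_lmul_orth[OF R] by auto
  then show ?thesis unfolding Nsp_def using W by blast
qed

lemma ev_subseq: "strict_mono s \<Longrightarrow> eventually P sequentially \<Longrightarrow> eventually (\<lambda>n. P (s n)) sequentially"
  unfolding eventually_sequentially by (meson le_trans seq_suble)

lemma lim_ev_zero:
  fixes f :: "nat \<Rightarrow> 'a::t2_space"
  assumes "f \<longlonglongrightarrow> L" "eventually (\<lambda>n. f n = c) sequentially"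
  shows "L = c"
proof -
  have "(\<lambda>n. c) \<longlonglongrightarrow> L" using assms(1) by (rule Lim_transform_eventually) (use assms(2) in \<open>simp add: eq_commute\<close>)
  then show ?thesis by (rule LIMSEQ_unique[OF tendsto_const, symmetric])
qed

lemma skew_lim:
  assumes "f \<longlonglongrightarrow> L" "eventually (\<lambda>n. skew (f n)) sequentially"
  shows "skew L"
proof -
  have "(\<lambda>n. transpose (f n) + f n) \<longlonglongrightarrow> transpose L + L"
    by (intro tendsto_add tendsto_transpose assms(1))
  moreover have "eventually (\<lambda>n. transpose (f n) + f n = 0) sequentially"
    using assms(2) by eventually_elim (simp add: skew_def)
  ultimately have "transpose L + L = 0" by (rule lim_ev_zero)
  then show ?thesis unfolding skew_def by (metis add_eq_0_iff minus_add_cancel add.commute)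
qed


lemma seq_extract:
  fixes S :: "'a::metric_space set" and f :: "nat \<Rightarrow> 'a"
  assumes "compact S" "\<And>n. f n \<in> S"
  obtains r l where "strict_mono r" "l \<in> S" "(f \<circ> r) \<longlonglongrightarrow> l"
proof -
  have "seq_compact S" using assms(1) by (rule compact_imp_seq_compact)
  moreover have "\<forall>n. f n \<in> S" using assms(2) by blast
  ultimately obtain l r where "l \<in> S" "strict_mono r" "(f \<circ> r) \<longlonglongrightarrow> l"
    by (rule seq_compactE)
  then show ?thesis using that by blast
qed


lemma limit_main:
  fixes N :: "nat \<Rightarrow> mat3" and M U :: mat3 and Rn Wn :: "nat \<Rightarrow> mat3"
  assumes U: "invertible U"
    and NM: "N \<longlonglongrightarrow> M" and M3: "M *v axis 3 1 = 0" and N3: "\<And>n. N n *v axis 3 1 = 0"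
    and Rn: "\<And>n. Rn n \<in> Rset (\<lambda>A. A \<bullet> N n) U"
    and Wn: "\<And>n. skew (Wn n)" "\<And>n. norm (Wn n) = 1"
    and Nn: "\<And>n. Rn n ** Wn n \<in> Nsp (\<lambda>A. A \<bullet> N n) U (Rn n)"
    and cl: "eventually (\<lambda>n. cls (N n) = cls M) sequentially"
  shows "\<exists>\<sigma> R W. strict_mono \<sigma> \<and> R \<in> Rset (\<lambda>A. A \<bullet> M) U \<and> skew W \<and> norm W = 1 \<and>
           R ** W \<in> Nsp (\<lambda>A. A \<bullet> M) U R \<and> ((\<lambda>n. Rn (\<sigma> n) ** Wn (\<sigma> n)) \<longlonglongrightarrow> R ** W)"
proof -
  have RnS: "Rn n \<in> SO3" and mxn: "\<forall>R'\<in>SO3. (R' ** U) \<bullet> N n \<le> (Rn n ** U) \<bullet> N n" for n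
    using Rn[of n] unfolding Rset_def by auto
  have "compact (SO3 \<times> sphere (0::mat3) 1)" by (intro compact_Times SO3_compact compact_sphere)
  moreover have "(Rn n, Wn n) \<in> SO3 \<times> sphere 0 1" for n using RnS Wn by simp
  ultimately obtain r l where r: "strict_mono r" and l: "l \<in> SO3 \<times> sphere 0 1"
    and lim: "((\<lambda>n. (Rn n, Wn n)) \<circ> r) \<longlonglongrightarrow> l"
    by (rule seq_extract)
  obtain R W where lRW: "l = (R, W)" by (cases l)
  have RS: "R \<in> SO3" and nW: "norm W = 1" using l lRW by auto
  have limR: "(\<lambda>n. Rn (r n)) \<longlonglongrightarrow> R" using tendsto_fst[OF lim] lRW by (simp add: o_def)
  have limW: "(\<lambda>n. Wn (r n)) \<longlonglongrightarrow> W" using tendsto_snd[OF lim] lRW by (simp add: o_def)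
  have limN: "(\<lambda>n. N (r n)) \<longlonglongrightarrow> M" using LIMSEQ_subseq_LIMSEQ[OF NM r] by (simp add: o_def)
  have skW: "skew W" by (rule skew_lim[OF limW]) (simp add: Wn)
  have mx: "\<forall>R'\<in>SO3. (R' ** U) \<bullet> M \<le> (R ** U) \<bullet> M"
  proof
    fix R' assume R': "R' \<in> SO3"
    have l1: "(\<lambda>n. (R' ** U) \<bullet> N (r n)) \<longlonglongrightarrow> (R' ** U) \<bullet> M"
      by (intro tendsto_inner tendsto_const limN)
    have l2: "(\<lambda>n. (Rn (r n) ** U) \<bullet> N (r n)) \<longlonglongrightarrow> (R ** U) \<bullet> M"
      by (intro tendsto_inner tendsto_mmult tendsto_const limN limR)
    have ev: "eventually (\<lambda>n. (R' ** U) \<bullet> N (r n) \<le> (Rn (r n) ** U) \<bullet> N (r n)) sequentially"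
      using mxn R' by simp
    show "(R' ** U) \<bullet> M \<le> (R ** U) \<bullet> M" by (rule tendsto_le[OF trivial_limit_sequentially l2 l1 ev])
  qed
  have RR: "R \<in> Rset (\<lambda>A. A \<bullet> M) U" unfolding Rset_def using RS mx by simp
  have limP: "(\<lambda>n. Rn (r n) ** Wn (r n)) \<longlonglongrightarrow> R ** W" by (intro tendsto_mmult limR limW)
  have orth: "\<forall>W'\<in>Zs M U R. W \<bullet> W' = 0"
  proof (cases "M = 0")
    case True
    have "eventually (\<lambda>n. N n = 0) sequentially"
      using cl by eventually_elim (use True in \<open>simp add: cls_def split: if_splits\<close>)
    then obtain n where "N n = 0" by (meson eventually_sequentially order.refl)
    then have "Wn n \<in> Zs (N n) U (Rn n)" using Wn by (simp add: Zs_def)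
    then have "Wn n \<bullet> Wn n = 0" using Nsp_orth[OF RnS Nn] by blast
    then show ?thesis using Wn(2)[of n] by simp
  next
    case M0: False
    show ?thesis
    proof (cases "R1 M")
      case False
      then show ?thesis using classify(1)[OF U RS mx M3] by simp
    next
      case True
      obtain K where K: "skew K" "K \<noteq> 0" "Zs M U R = range (\<lambda>t. t *\<^sub>R K)"
        using classify(2)[OF U RS mx M3 M0 True] by blast
      define P where "P n \<longleftrightarrow> (\<exists>a. a \<in> Zs (N n) U (Rn n) \<and> norm a = 1)" for n
      define a where "a n = (if P n then (SOME a. a \<in> Zs (N n) U (Rn n) \<and> norm a = 1) else Wn n)" for n
      have na: "norm (a n) = 1" for n
      proof (cases "P n")
        case True
        then show ?thesis unfolding a_def using someI_ex[OF True[unfolded P_def]] by simp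
      next
        case False
        then show ?thesis unfolding a_def using Wn by simp
      qed
      have evP: "eventually P sequentially"
        using cl
      proof eventually_elim
        case (elim n)
        then have "N n \<noteq> 0" "R1 (N n)" using M0 True by (simp_all add: cls_def split: if_splits)
        then obtain Kn where Kn: "skew Kn" "Kn \<noteq> 0" "Zs (N n) U (Rn n) = range (\<lambda>t. t *\<^sub>R Kn)"
          using classify(2)[OF U RnS mxn N3] by blast
        have "(1 / norm Kn) *\<^sub>R Kn \<in> Zs (N n) U (Rn n)" using Kn(3) by blast
        moreover have "norm ((1 / norm Kn) *\<^sub>R Kn) = 1" using Kn(2) by simp
        ultimately show "P n" unfolding P_def by blast
      qed
      have eva: "eventually (\<lambda>n. a n \<in> Zs (N n) U (Rn n)) sequentially"
        using evP
      proof eventually_elim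
        case (elim n)
        then show ?case unfolding a_def using someI_ex[OF elim[unfolded P_def]] by simp
      qed
      have "compact (sphere (0::mat3) 1)" by (rule compact_sphere)
      moreover have "(a \<circ> r) n \<in> sphere 0 1" for n using na by simp
      ultimately obtain r2 A where r2: "strict_mono r2" and A: "A \<in> sphere 0 1"
        and limA': "((a \<circ> r) \<circ> r2) \<longlonglongrightarrow> A"
        by (rule seq_extract)
      define s where "s = r \<circ> r2"
      have s: "strict_mono s" unfolding s_def using r r2 by (rule strict_mono_o)
      have limA: "(\<lambda>n. a (s n)) \<longlonglongrightarrow> A" using limA' by (simp add: s_def o_def)
      have limRs: "(\<lambda>n. Rn (s n)) \<longlonglongrightarrow> R" using LIMSEQ_subseq_LIMSEQ[OF limR r2] by (simp add: s_def o_def)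
      have limWs: "(\<lambda>n. Wn (s n)) \<longlonglongrightarrow> W" using LIMSEQ_subseq_LIMSEQ[OF limW r2] by (simp add: s_def o_def)
      have limNs: "(\<lambda>n. N (s n)) \<longlonglongrightarrow> M" using LIMSEQ_subseq_LIMSEQ[OF NM s] by (simp add: o_def)
      have evs: "eventually (\<lambda>n. a (s n) \<in> Zs (N (s n)) U (Rn (s n))) sequentially"
        using ev_subseq[OF s eva] .
      have skA: "skew A"
        by (rule skew_lim[OF limA]) (use evs in \<open>eventually_elim, simp add: Zs_def\<close>)
      have "(\<lambda>n. (Rn (s n) ** a (s n) ** a (s n) ** U) \<bullet> N (s n)) \<longlonglongrightarrow> (R ** A ** A ** U) \<bullet> M"
        by (intro tendsto_inner tendsto_mmult tendsto_const limNs limRs limA)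
      moreover have "eventually (\<lambda>n. (Rn (s n) ** a (s n) ** a (s n) ** U) \<bullet> N (s n) = 0) sequentially"
        using evs by eventually_elim (simp add: Zs_def)
      ultimately have "(R ** A ** A ** U) \<bullet> M = 0" by (rule lim_ev_zero)
      then have AZ: "A \<in> Zs M U R" using skA by (simp add: Zs_def)
      have "(\<lambda>n. Wn (s n) \<bullet> a (s n)) \<longlonglongrightarrow> W \<bullet> A" by (intro tendsto_inner limWs limA)
      moreover have "eventually (\<lambda>n. Wn (s n) \<bullet> a (s n) = 0) sequentially"
        using evs by eventually_elim (rule Nsp_orth[OF RnS Nn])
      ultimately have WA: "W \<bullet> A = 0" by (rule lim_ev_zero)
      obtain t0 where t0: "A = t0 *\<^sub>R K" using AZ K(3) by blast
      have "t0 \<noteq> 0" using A t0 by auto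
      show ?thesis
      proof
        fix W' assume "W' \<in> Zs M U R"
        then obtain t where "W' = t *\<^sub>R K" using K(3) by blast
        then have "W' = (t / t0) *\<^sub>R A" using t0 \<open>t0 \<noteq> 0\<close> by simp
        then show "W \<bullet> W' = 0" using WA by simp
      qed
    qed
  qed
  have "R ** W \<in> Nsp (\<lambda>A. A \<bullet> M) U R" by (rule Nsp_intro[OF RS skW orth])
  then show ?thesis using r RR skW nW limP by blast
qed

definition phi :: "real^2 \<Rightarrow> real^3" where "phi x = vector [x$1, x$2, 0]"

lemma meas_phi: "S \<in> sets lebesgue \<Longrightarrow> (\<lambda>x. phi x $ k) \<in> borel_measurable (lebesgue_on S)"
proof -
  assume S: "S \<in> sets lebesgue"
  have "(\<lambda>x. phi x $ k) = (\<lambda>x. if k = 1 then x$1 else if k = 2 then x$2 else 0)"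
    using exhaust_3[of k] by (auto simp: phi_def)
  moreover have "continuous_on S (\<lambda>x::real^2. if k = 1 then x$1 else if k = 2 then x$2 else 0)"
    by (cases "k = 1"; cases "k = 2") (simp_all add: continuous_on_component continuous_on_id)
  ultimately show ?thesis using continuous_imp_measurable_on_sets_lebesgue[OF _ S] by simp
qed

lemma meas_gi: "g \<in> borel_measurable M \<Longrightarrow> (\<lambda>x. (g x :: real^3) $ i) \<in> borel_measurable M"
proof -
  assume g: "g \<in> borel_measurable M"
  have "(\<lambda>v::real^3. v $ i) \<in> borel_measurable borel"
    by (rule borel_measurable_continuous_onI) (intro continuous_intros)
  from measurable_compose[OF g this] show ?thesis .
qed

lemma pw1: fixes t p :: real assumes "p \<ge> 1" "t \<ge> 0" shows "t \<le> 1 + t powr p"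
proof (cases "t \<le> 1")
  case True then show ?thesis by (smt (verit) powr_ge_zero)
next
  case False
  then have "t powr 1 \<le> t powr p" using assms by (intro powr_mono) auto
  then show ?thesis using False by simp
qed

lemma pw2: fixes t p \<delta> :: real assumes "p \<ge> 1" "t \<ge> 0" "\<delta> > 0"
  shows "t \<le> \<delta> + \<delta> powr (1 - p) * t powr p"
proof (cases "t \<le> \<delta>")
  case True then show ?thesis by (smt (verit) powr_ge_zero mult_nonneg_nonneg)
next
  case False
  then have tp: "t > 0" using assms by simp
  have "t powr (1 - p) \<le> \<delta> powr (1 - p)" using False assms by (intro powr_mono2') auto
  then have "t powr (1 - p) * t powr p \<le> \<delta> powr (1 - p) * t powr p" by (simp add: mult_right_mono)
  moreover have "t powr (1 - p) * t powr p = t" using tp by (simp add: powr_add[symmetric])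
  ultimately show ?thesis using assms by simp
qed

lemma pw3: fixes a b :: "'a::real_normed_vector" and p :: real assumes "p \<ge> 1"
  shows "norm (a - b) powr p \<le> 2 powr p * (norm a powr p + norm b powr p)"
proof -
  define m where "m = max (norm a) (norm b)"
  have "norm (a - b) \<le> 2 * m" unfolding m_def using norm_triangle_ineq4[of a b] by linarith
  then have "norm (a - b) powr p \<le> (2 * m) powr p" using assms by (intro powr_mono2) auto
  also have "\<dots> = 2 powr p * m powr p" unfolding m_def by (simp add: powr_mult)
  also have "m powr p \<le> norm a powr p + norm b powr p"
    unfolding m_def by (cases "norm a \<le> norm b") (simp_all add: max_def add_increasing add_increasing2)
  then have "2 powr p * m powr p \<le> 2 powr p * (norm a powr p + norm b powr p)" by simp
  finally show ?thesis .
qed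


lemma L1_of_Lp:
  fixes g :: "real^2 \<Rightarrow> real^3"
  assumes S: "S \<in> lmeasurable" and g: "g \<in> borel_measurable (lebesgue_on S)"
    and gp: "integrable (lebesgue_on S) (\<lambda>x. norm (g x) powr p)" and p: "p \<ge> 1"
  shows "integrable (lebesgue_on S) g"
proof -
  have c: "integrable (lebesgue_on S) (\<lambda>x. 1::real)"
    using finite_measure.integrable_const[OF finite_measure_lebesgue_on[OF S]] .
  have i1: "integrable (lebesgue_on S) (\<lambda>x. 1 + norm (g x) powr p)" by (rule Bochner_Integration.integrable_add[OF c gp])
  have ae: "AE x in lebesgue_on S. norm (g x) \<le> norm (1 + norm (g x) powr p)"
  proof (rule AE_I2)
    fix x
    have "norm (g x) \<le> 1 + norm (g x) powr p" by (rule pw1[OF p norm_ge_zero])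
    moreover have "0 \<le> 1 + norm (g x) powr p" by (simp add: add_nonneg_nonneg)
    ultimately show "norm (g x) \<le> norm (1 + norm (g x) powr p)" by simp
  qed
  show ?thesis by (rule Bochner_Integration.integrable_bound[OF i1 g ae])
qed

lemma int_comp:
  fixes g :: "real^2 \<Rightarrow> real^3"
  assumes S: "S \<in> lmeasurable" and B: "\<forall>x\<in>S. norm x \<le> B" and g: "integrable (lebesgue_on S) g"
  shows "integrable (lebesgue_on S) (\<lambda>x. g x $ i * phi x $ k)"
proof -
  have Sl: "S \<in> sets lebesgue" using S by auto
  have "integrable (lebesgue_on S) (\<lambda>x. B * norm (g x))" using g by simp
  moreover have "(\<lambda>x. g x $ i * phi x $ k) \<in> borel_measurable (lebesgue_on S)"
    using meas_gi[OF borel_measurable_integrable[OF g]] meas_phi[OF Sl] by (rule borel_measurable_times)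
  moreover have "AE x in lebesgue_on S. norm (g x $ i * phi x $ k) \<le> norm (B * norm (g x))"
  proof (rule AE_I2)
    fix x assume "x \<in> space (lebesgue_on S)"
    then have xB: "norm x \<le> B" using B by simp
    have "\<bar>phi x $ k\<bar> \<le> norm x"
      using exhaust_3[of k] component_le_norm_cart[of x 1] component_le_norm_cart[of x 2]
      by (auto simp: phi_def)
    then have pk: "\<bar>phi x $ k\<bar> \<le> B" using xB by simp
    have gi: "\<bar>g x $ i\<bar> \<le> norm (g x)" by (rule component_le_norm_cart)
    have "\<bar>g x $ i * phi x $ k\<bar> \<le> norm (g x) * B"
      unfolding abs_mult by (rule mult_mono[OF gi pk]) auto
    moreover have "B \<ge> 0" using xB norm_ge_zero order_trans by blast
    ultimately show "norm (g x $ i * phi x $ k) \<le> norm (B * norm (g x))" by (simp add: mult.commute)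
  qed
  ultimately show ?thesis by (rule Bochner_Integration.integrable_bound)
qed

lemma int_diff_Lp:
  fixes g f :: "real^2 \<Rightarrow> real^3"
  assumes g: "g \<in> borel_measurable (lebesgue_on S)" and f: "f \<in> borel_measurable (lebesgue_on S)"
    and gp: "integrable (lebesgue_on S) (\<lambda>x. norm (g x) powr p)"
    and fp: "integrable (lebesgue_on S) (\<lambda>x. norm (f x) powr p)" and p: "p \<ge> 1"
  shows "integrable (lebesgue_on S) (\<lambda>x. norm (c *\<^sub>R g x - f x) powr p)"
proof -
  have "integrable (lebesgue_on S) (\<lambda>x. 2 powr p * (\<bar>c\<bar> powr p * norm (g x) powr p + norm (f x) powr p))"
    using gp fp by (intro integrable_mult_right Bochner_Integration.integrable_add)
  moreover have "(\<lambda>x. norm (c *\<^sub>R g x - f x) powr p) \<in> borel_measurable (lebesgue_on S)"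
    using g f by measurable
  moreover have "AE x in lebesgue_on S. norm (norm (c *\<^sub>R g x - f x) powr p) \<le>
      norm (2 powr p * (\<bar>c\<bar> powr p * norm (g x) powr p + norm (f x) powr p))"
  proof (rule AE_I2)
    fix x
    have "norm (c *\<^sub>R g x - f x) powr p \<le> 2 powr p * (norm (c *\<^sub>R g x) powr p + norm (f x) powr p)"
      by (rule pw3[OF p])
    also have "norm (c *\<^sub>R g x) powr p = \<bar>c\<bar> powr p * norm (g x) powr p" by (simp add: powr_mult)
    finally show "norm (norm (c *\<^sub>R g x - f x) powr p) \<le>
      norm (2 powr p * (\<bar>c\<bar> powr p * norm (g x) powr p + norm (f x) powr p))" by simp
  qed
  ultimately show ?thesis by (rule Bochner_Integration.integrable_bound)
qed

definition mom :: "(real^2) set \<Rightarrow> (real^2 \<Rightarrow> real^3) \<Rightarrow> mat3" where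
  "mom S g = (\<chi> i k. integral\<^sup>L (lebesgue_on S) (\<lambda>x. g x $ i * phi x $ k))"

lemma load_eq:
  assumes S: "S \<in> lmeasurable" and B: "\<forall>x\<in>S. norm x \<le> B" and g: "integrable (lebesgue_on S) g"
  shows "load S g = (\<lambda>A. A \<bullet> mom S g)"
proof
  fix A :: mat3
  have e: "g x \<bullet> (A *v vector [x$1, x$2, 0]) = (\<Sum>i\<in>UNIV. \<Sum>k\<in>UNIV. A$i$k * (g x $ i * phi x $ k))" for x
    unfolding phi_def[symmetric]
    by (simp add: inner_vec_def matrix_vector_mult_def sum_distrib_left mult_ac)
  have "load S g A = integral\<^sup>L (lebesgue_on S) (\<lambda>x. \<Sum>i\<in>UNIV. \<Sum>k\<in>UNIV. A$i$k * (g x $ i * phi x $ k))"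
    unfolding load_def e ..
  also have "\<dots> = (\<Sum>i\<in>UNIV. \<Sum>k\<in>UNIV. A$i$k * integral\<^sup>L (lebesgue_on S) (\<lambda>x. g x $ i * phi x $ k))"
    using int_comp[OF S B g] by (simp add: integral_sum)
  also have "\<dots> = A \<bullet> mom S g" unfolding inner_mat mom_def by simp
  finally show "load S g A = A \<bullet> mom S g" .
qed

lemma mom3: "mom S g *v axis 3 1 = 0"
  by (simp add: mom_def matrix_vector_mult_def axis_def sum_3 vec_eq_iff phi_def)

lemma mom_diff:
  assumes S: "S \<in> lmeasurable" and B: "\<forall>x\<in>S. norm x \<le> B"
    and g: "integrable (lebesgue_on S) g" and f: "integrable (lebesgue_on S) f"
  shows "mom S (\<lambda>x. c *\<^sub>R g x - f x) = c *\<^sub>R mom S g - mom S f"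
proof -
  have "(c *\<^sub>R g x - f x) $ i * phi x $ k = c * (g x $ i * phi x $ k) - f x $ i * phi x $ k" for x i k
    by (simp add: algebra_simps)
  then show ?thesis
    unfolding mom_def vec_eq_iff using int_comp[OF S B g] int_comp[OF S B f] by simp
qed

lemma mom_bound:
  assumes S: "S \<in> lmeasurable" and B: "\<forall>x\<in>S. norm x \<le> B" and u: "integrable (lebesgue_on S) u"
  shows "\<bar>mom S u $ i $ k\<bar> \<le> B * integral\<^sup>L (lebesgue_on S) (\<lambda>x. norm (u x))"
proof -
  have "\<bar>mom S u $ i $ k\<bar> \<le> integral\<^sup>L (lebesgue_on S) (\<lambda>x. B * norm (u x))"
    unfolding mom_def vec_lambda_beta
  proof (rule integral_abs_bound_integral[OF int_comp[OF S B u]])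
    show "integrable (lebesgue_on S) (\<lambda>x. B * norm (u x))" using u by simp
    fix x assume "x \<in> space (lebesgue_on S)"
    then have xB: "norm x \<le> B" using B by simp
    have "\<bar>phi x $ k\<bar> \<le> norm x"
      using exhaust_3[of k] component_le_norm_cart[of x 1] component_le_norm_cart[of x 2]
      by (auto simp: phi_def)
    then have pk: "\<bar>phi x $ k\<bar> \<le> B" using xB by simp
    have gi: "\<bar>u x $ i\<bar> \<le> norm (u x)" by (rule component_le_norm_cart)
    have "\<bar>u x $ i * phi x $ k\<bar> \<le> norm (u x) * B"
      unfolding abs_mult by (rule mult_mono[OF gi pk]) auto
    then show "\<bar>u x $ i * phi x $ k\<bar> \<le> B * norm (u x)" by (simp add: mult.commute)
  qed
  also have "\<dots> = B * integral\<^sup>L (lebesgue_on S) (\<lambda>x. norm (u x))" by simp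
  finally show ?thesis .
qed

lemma Lp_to_L1:
  fixes u :: "nat \<Rightarrow> real^2 \<Rightarrow> real^3"
  assumes S: "S \<in> lmeasurable" and p: "p \<ge> 1"
    and um: "\<And>n. u n \<in> borel_measurable (lebesgue_on S)"
    and up: "\<And>n. integrable (lebesgue_on S) (\<lambda>x. norm (u n x) powr p)"
    and I: "(\<lambda>n. integral\<^sup>L (lebesgue_on S) (\<lambda>x. norm (u n x) powr p)) \<longlonglongrightarrow> 0"
  shows "(\<lambda>n. integral\<^sup>L (lebesgue_on S) (\<lambda>x. norm (u n x))) \<longlonglongrightarrow> 0"
proof (unfold tendsto_iff, intro allI impI)
  fix \<epsilon> :: real assume e: "\<epsilon> > 0"
  define \<mu> where "\<mu> = measure (lebesgue_on S) S"
  have mu0: "\<mu> \<ge> 0" unfolding \<mu>_def by simp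
  have c: "integrable (lebesgue_on S) (\<lambda>x. 1::real)"
    using finite_measure.integrable_const[OF finite_measure_lebesgue_on[OF S]] .
  define \<delta> where "\<delta> = \<epsilon> / (2 * (\<mu> + 1))"
  have d: "\<delta> > 0" using e mu0 unfolding \<delta>_def by simp
  define C where "C = \<delta> powr (1 - p)"
  have C: "C > 0" using d unfolding C_def by simp
  have dmu: "\<delta> * \<mu> \<le> \<epsilon> / 2"
  proof -
    have "\<delta> * \<mu> = (\<epsilon> / 2) * (\<mu> / (\<mu> + 1))" unfolding \<delta>_def by (simp add: field_simps)
    also have "\<dots> \<le> (\<epsilon> / 2) * 1" using e mu0 by (intro mult_left_mono) simp_all
    finally show ?thesis by simp
  qed
  have "eventually (\<lambda>n. integral\<^sup>L (lebesgue_on S) (\<lambda>x. norm (u n x) powr p) < \<epsilon> / (2 * C)) sequentially"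
    using order_tendstoD(2)[OF I] e C by simp
  then show "eventually (\<lambda>n. dist (integral\<^sup>L (lebesgue_on S) (\<lambda>x. norm (u n x))) 0 < \<epsilon>) sequentially"
  proof eventually_elim
    case (elim n)
    have i1: "integrable (lebesgue_on S) (\<lambda>x. norm (u n x))"
      using L1_of_Lp[OF S um up p] by simp
    have i2: "integrable (lebesgue_on S) (\<lambda>x. \<delta> * 1 + C * norm (u n x) powr p)"
      using c up by (intro Bochner_Integration.integrable_add integrable_mult_right)
    have "integral\<^sup>L (lebesgue_on S) (\<lambda>x. norm (u n x)) \<le>
          integral\<^sup>L (lebesgue_on S) (\<lambda>x. \<delta> * 1 + C * norm (u n x) powr p)"
      by (rule integral_mono[OF i1 i2]) (use pw2[OF p norm_ge_zero d] C_def in simp)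
    also have "\<dots> = integral\<^sup>L (lebesgue_on S) (\<lambda>x. \<delta> * 1) + integral\<^sup>L (lebesgue_on S) (\<lambda>x. C * norm (u n x) powr p)"
      by (rule Bochner_Integration.integral_add) (use c up in \<open>intro integrable_mult_right; simp\<close>)+
    also have "\<dots> = \<delta> * \<mu> + C * integral\<^sup>L (lebesgue_on S) (\<lambda>x. norm (u n x) powr p)"
      by (simp add: \<mu>_def)
    also have "\<dots> < \<epsilon> / 2 + C * (\<epsilon> / (2 * C))"
      using dmu elim C by (intro add_le_less_mono mult_strict_left_mono) simp_all
    also have "\<dots> = \<epsilon>" using C by simp
    finally have "integral\<^sup>L (lebesgue_on S) (\<lambda>x. norm (u n x)) < \<epsilon>" .
    moreover have "integral\<^sup>L (lebesgue_on S) (\<lambda>x. norm (u n x)) \<ge> 0" by simp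
    ultimately show ?case by simp
  qed
qed

lemma sym_pos_inv: "sym_pos_def U \<Longrightarrow> invertible U"
  unfolding invertible_left_inverse matrix_left_invertible_ker sym_pos_def_def
  by (metis inner_zero_right less_irrefl)

lemma inner_scale_fun: "(\<lambda>A. A \<bullet> (c *\<^sub>R Y)) = (\<lambda>A. c * (A \<bullet> (Y::mat3)))"
  by simp

lemma Rset_scale: "c > 0 \<Longrightarrow> Rset (\<lambda>A. A \<bullet> (c *\<^sub>R Y)) U = Rset (\<lambda>A. A \<bullet> Y) U"
  unfolding Rset_def inner_scale_fun by simp

lemma Tsp_scale: "c > 0 \<Longrightarrow> Tsp (\<lambda>A. A \<bullet> (c *\<^sub>R Y)) U R = Tsp (\<lambda>A. A \<bullet> Y) U R"
  unfolding Tsp_def inner_scale_fun by simp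

lemma Nsp_scale: "c > 0 \<Longrightarrow> Nsp (\<lambda>A. A \<bullet> (c *\<^sub>R Y)) U R = Nsp (\<lambda>A. A \<bullet> Y) U R"
  unfolding Nsp_def using Tsp_scale by simp

lemma R1_scale: assumes "c \<noteq> 0" shows "R1 (c *\<^sub>R Y) \<longleftrightarrow> R1 Y"
proof
  assume "R1 (c *\<^sub>R Y)"
  then obtain y where y: "\<forall>w. \<exists>t. (c *\<^sub>R Y) *v w = t *\<^sub>R y" unfolding R1_def by blast
  have "\<exists>t. Y *v w = t *\<^sub>R y" for w
  proof -
    obtain t where "(c *\<^sub>R Y) *v w = t *\<^sub>R y" using y by blast
    then have "Y *v w = (t / c) *\<^sub>R y" using assms
      by (simp add: scaleR_matrix_vector_assoc[symmetric]) (metis (no_types) divideR_right nonzero_mult_div_cancel_left scaleR_scaleR divide_inverse_commute)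
    then show ?thesis by blast
  qed
  then show "R1 Y" unfolding R1_def by blast
next
  assume "R1 Y"
  then obtain y where y: "\<forall>w. \<exists>t. Y *v w = t *\<^sub>R y" unfolding R1_def by blast
  have "\<exists>t. (c *\<^sub>R Y) *v w = t *\<^sub>R y" for w
  proof -
    obtain t where "Y *v w = t *\<^sub>R y" using y by blast
    then have "(c *\<^sub>R Y) *v w = (c * t) *\<^sub>R y" by (simp add: scaleR_matrix_vector_assoc[symmetric])
    then show ?thesis by blast
  qed
  then show "R1 (c *\<^sub>R Y)" unfolding R1_def by blast
qed

lemma cls_scale: "c \<noteq> 0 \<Longrightarrow> cls (c *\<^sub>R Y) = cls Y"
  unfolding cls_def using R1_scale by simp

lemma Lam_ne:
  fixes U :: "nat \<Rightarrow> mat3"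
  assumes "l \<ge> 1"
  shows "\<exists>i. i \<in> Lam (\<lambda>A. A \<bullet> X) l U"
proof -
  define F where "F = (\<lambda>A::mat3. A \<bullet> X)"
  define Ri where "Ri i = (SOME R. R \<in> Rset F (U i))" for i
  have Ri: "Ri i \<in> Rset F (U i)" for i unfolding Ri_def F_def using Rset_ne by (rule someI_ex)
  define m where "m i = F (Ri i ** U i)" for i
  define mm where "mm = Max (m ` {1..l})"
  have fin: "finite (m ` {1..l})" "m ` {1..l} \<noteq> {}" using assms by auto
  obtain i where i: "i \<in> {1..l}" "m i = mm" using Max_in[OF fin] unfolding mm_def by auto
  have "i \<in> Lam F l U"
    unfolding Lam_def
  proof (intro CollectI conjI subsetI)
    show "i \<in> {1..l}" by fact
    fix A assume "A \<in> (\<lambda>R. R ** U i) ` Rset F (U i)"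
    then obtain R where R: "R \<in> Rset F (U i)" "A = R ** U i" by blast
    have RS: "R \<in> SO3" using R(1) unfolding Rset_def by simp
    have FA: "F A = mm"
    proof -
      have "F A \<le> m i" using Ri[of i] R unfolding m_def Rset_def by auto
      moreover have "m i \<le> F A" using R RS Ri[of i] unfolding m_def Rset_def by auto
      ultimately show ?thesis using i by simp
    qed
    have "A \<in> wellset l U" unfolding wellset_def using i(1) RS R(2) by blast
    moreover have "\<forall>B\<in>wellset l U. F B \<le> F A"
    proof
      fix B assume "B \<in> wellset l U"
      then obtain k R' where k: "k \<in> {1..l}" "R' \<in> SO3" "B = R' ** U k" unfolding wellset_def by blast
      have "F B \<le> m k" using Ri[of k] k unfolding m_def Rset_def by auto
      also have "m k \<le> mm" unfolding mm_def using fin k(1) by (intro Max_ge) auto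
      finally show "F B \<le> F A" using FA by simp
    qed
    ultimately show "A \<in> argmax_on F (wellset l U)" unfolding argmax_on_def by blast
  qed
  then show ?thesis unfolding F_def by blast
qed


theorem lemma5p3:
  fixes l :: nat and U :: "nat \<Rightarrow> mat3" and S :: "(real^2) set"
    and \<alpha> q :: real and h :: "nat \<Rightarrow> real"
    and fh :: "nat \<Rightarrow> real^2 \<Rightarrow> real^3" and f :: "real^2 \<Rightarrow> real^3"
    and j :: nat and Rh Wh :: "nat \<Rightarrow> mat3"
  assumes U: "\<And>i. i \<in> {1..l} \<Longrightarrow> sym_pos_def (U i)"
    and S: "bounded S" "connected S" "lipschitz_domain S"
    and alpha: "\<alpha> \<ge> 2"
    and q: "1 < q" "q \<le> 2"
    and h: "\<And>n. h n > 0" "h \<longlonglongrightarrow> 0"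
    and fh_meas: "\<And>n. fh n \<in> borel_measurable (lebesgue_on S)"
    and fh_Lq: "\<And>n. integrable (lebesgue_on S) (\<lambda>x. norm (fh n x) powr (q / (q - 1)))"
    and fh_mean: "\<And>n. integral\<^sup>L (lebesgue_on S) (fh n) = 0"
    and f_meas: "f \<in> borel_measurable (lebesgue_on S)"
    and f_Lq: "integrable (lebesgue_on S) (\<lambda>x. norm (f x) powr (q / (q - 1)))"
    and conv: "(\<lambda>n. (integral\<^sup>L (lebesgue_on S)
                  (\<lambda>x. norm (h n powr (- \<alpha> / 2 - 1) *\<^sub>R fh n x - f x) powr (q / (q - 1))))
                  powr ((q - 1) / q)) \<longlonglongrightarrow> 0"
    and F1: "eventually (\<lambda>n. Lam (load S (fh n)) l U = Lam (load S f) l U) sequentially"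
    and F2: "\<And>i. i \<in> Lam (load S f) l U \<Longrightarrow>
               eventually (\<lambda>n. \<forall>R\<in>Rset (load S (fh n)) (U i). \<forall>R'\<in>Rset (load S f) (U i).
                  dim (Tsp (load S (fh n)) (U i) R) = dim (Tsp (load S f) (U i) R')) sequentially"
    and j: "j \<in> {1..l}"
    and Rh: "\<And>n. Rh n \<in> Rset (load S (fh n)) (U j)"
    and Wh: "\<And>n. skew (Wh n)" "\<And>n. norm (Wh n) = 1"
    and N: "\<And>n. Rh n ** Wh n \<in> Nsp (load S (fh n)) (U j) (Rh n)"
  shows "\<exists>\<sigma> R W. strict_mono \<sigma> \<and> R \<in> Rset (load S f) (U j) \<and> skew W \<and> norm W = 1 \<and>
           R ** W \<in> Nsp (load S f) (U j) R \<and>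
           ((\<lambda>n. Rh (\<sigma> n) ** Wh (\<sigma> n)) \<longlonglongrightarrow> R ** W)"
proof -
  define p where "p = q / (q - 1)"
  have q1: "q - 1 > 0" using q by simp
  have p1: "p \<ge> 1" unfolding p_def using q1 by (simp add: field_simps)
  have Sopen: "open S" using S(3) unfolding lipschitz_domain_def by blast
  have Sl: "S \<in> lmeasurable" by (rule lmeasurable_open[OF S(1) Sopen])
  obtain B where B: "\<forall>x\<in>S. norm x \<le> B" using S(1) unfolding bounded_iff by blast
  have ifh: "integrable (lebesgue_on S) (fh n)" for n
    using L1_of_Lp[OF Sl fh_meas fh_Lq[unfolded p_def[symmetric]] p1] .
  have iff: "integrable (lebesgue_on S) f"
    using L1_of_Lp[OF Sl f_meas f_Lq[unfolded p_def[symmetric]] p1] .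
  have loadfh: "load S (fh n) = (\<lambda>A. A \<bullet> mom S (fh n))" for n by (rule load_eq[OF Sl B ifh])
  have loadf: "load S f = (\<lambda>A. A \<bullet> mom S f)" by (rule load_eq[OF Sl B iff])
  define c where "c n = h n powr (- \<alpha> / 2 - 1)" for n
  have c0: "c n > 0" for n unfolding c_def using h(1)[of n] by simp
  define N where "N n = c n *\<^sub>R mom S (fh n)" for n
  define M where "M = mom S f"
  define u where "u n = (\<lambda>x. c n *\<^sub>R fh n x - f x)" for n
  have um: "u n \<in> borel_measurable (lebesgue_on S)" for n
    unfolding u_def using fh_meas[of n] f_meas by measurable
  have up: "integrable (lebesgue_on S) (\<lambda>x. norm (u n x) powr p)" for n
    unfolding u_def using int_diff_Lp[OF fh_meas f_meas fh_Lq[unfolded p_def[symmetric]] f_Lq[unfolded p_def[symmetric]] p1] .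
  define I where "I n = integral\<^sup>L (lebesgue_on S) (\<lambda>x. norm (u n x) powr p)" for n
  have I0: "I n \<ge> 0" for n unfolding I_def by simp
  have convI: "(\<lambda>n. I n powr ((q - 1) / q)) \<longlonglongrightarrow> 0"
    using conv unfolding I_def u_def c_def p_def .
  have "(\<lambda>n. (I n powr ((q - 1) / q)) powr p) \<longlonglongrightarrow> 0"
    by (rule tendsto_zero_powrI[OF convI tendsto_const]) (use p1 in simp_all)
  moreover have "(I n powr ((q - 1) / q)) powr p = I n" for n
  proof -
    have "((q - 1) / q) * p = 1" unfolding p_def using q1 q by (simp add: field_simps)
    then show ?thesis using I0[of n] by (simp add: powr_powr)
  qed
  ultimately have Ilim: "I \<longlonglongrightarrow> 0" by simp
  have L1: "(\<lambda>n. integral\<^sup>L (lebesgue_on S) (\<lambda>x. norm (u n x))) \<longlonglongrightarrow> 0"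
  proof (rule Lp_to_L1[OF Sl p1 um up])
    have "I = (\<lambda>n. integral\<^sup>L (lebesgue_on S) (\<lambda>x. norm (u n x) powr p))" by (rule ext) (simp add: I_def)
    then show "(\<lambda>n. integral\<^sup>L (lebesgue_on S) (\<lambda>x. norm (u n x) powr p)) \<longlonglongrightarrow> 0" using Ilim by simp
  qed
  have momu: "mom S (u n) = N n - M" for n
    unfolding u_def N_def M_def by (rule mom_diff[OF Sl B ifh iff])
  have iu: "integrable (lebesgue_on S) (u n)" for n
    unfolding u_def by (intro Bochner_Integration.integrable_diff integrable_scaleR_right ifh iff)
  have NM: "N \<longlonglongrightarrow> M"
  proof (rule LIM_zero_cancel)
    show "(\<lambda>n. N n - M) \<longlonglongrightarrow> 0"
    proof (rule vec_tendstoI)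
      fix i
      show "(\<lambda>n. (N n - M) $ i) \<longlonglongrightarrow> 0 $ i"
      proof (rule vec_tendstoI)
        fix k
        define L where "L n = B * integral\<^sup>L (lebesgue_on S) (\<lambda>x. norm (u n x))" for n
        have Ll: "L \<longlonglongrightarrow> 0"
        proof -
          have "(\<lambda>n. B * integral\<^sup>L (lebesgue_on S) (\<lambda>x. norm (u n x))) \<longlonglongrightarrow> B * 0"
            by (rule tendsto_mult[OF tendsto_const L1])
          then show ?thesis unfolding L_def[abs_def] by simp
        qed
        have bd: "norm ((N n - M) $ i $ k) \<le> L n" for n
        proof -
          have "\<bar>mom S (u n) $ i $ k\<bar> \<le> L n" unfolding L_def by (rule mom_bound[OF Sl B iu])
          then show ?thesis unfolding momu by simp
        qed
        have "(\<lambda>n. (N n - M) $ i $ k) \<longlonglongrightarrow> 0"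
          by (rule Lim_null_comparison[OF always_eventually Ll]) (use bd in blast)
        then show "(\<lambda>n. (N n - M) $ i $ k) \<longlonglongrightarrow> 0 $ i $ k" by simp
      qed
    qed
  qed
  have M3: "M *v axis 3 1 = 0" unfolding M_def by (rule mom3)
  have N3: "N n *v axis 3 1 = 0" for n
    unfolding N_def by (simp add: scaleR_matrix_vector_assoc[symmetric] mom3)
  have Uinv: "invertible (U i)" if "i \<in> {1..l}" for i using U[OF that] by (rule sym_pos_inv)
  have RnN: "Rh n \<in> Rset (\<lambda>A. A \<bullet> N n) (U j)" for n
    using Rh[of n] unfolding N_def loadfh Rset_scale[OF c0] .
  have NnN: "Rh n ** Wh n \<in> Nsp (\<lambda>A. A \<bullet> N n) (U j) (Rh n)" for n
    using N[of n] unfolding N_def loadfh Nsp_scale[OF c0] .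
  have l1: "l \<ge> 1" using j by simp
  obtain i where i: "i \<in> Lam (load S f) l U" using Lam_ne[OF l1, of M U] unfolding loadf M_def by blast
  have il: "i \<in> {1..l}" using i unfolding Lam_def by simp
  have cl: "eventually (\<lambda>n. cls (N n) = cls M) sequentially"
    using F2[OF i]
  proof eventually_elim
    case (elim n)
    obtain R where R: "R \<in> Rset (\<lambda>A. A \<bullet> mom S (fh n)) (U i)" using Rset_ne by blast
    obtain R' where R': "R' \<in> Rset (\<lambda>A. A \<bullet> M) (U i)" using Rset_ne by blast
    have "dim (Tsp (\<lambda>A. A \<bullet> mom S (fh n)) (U i) R) = dim (Tsp (\<lambda>A. A \<bullet> M) (U i) R')"
      using elim R R' unfolding loadfh loadf M_def by blast
    moreover have "dim (Tsp (\<lambda>A. A \<bullet> mom S (fh n)) (U i) R) = cls (mom S (fh n))"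
      by (rule dim_Tsp[OF Uinv[OF il] R mom3])
    moreover have "dim (Tsp (\<lambda>A. A \<bullet> M) (U i) R') = cls M"
      by (rule dim_Tsp[OF Uinv[OF il] R' M3])
    ultimately show "cls (N n) = cls M" unfolding N_def using cls_scale c0
      by (metis less_irrefl)
  qed
  obtain \<sigma> R W where res: "strict_mono \<sigma>" "R \<in> Rset (\<lambda>A. A \<bullet> M) (U j)" "skew W" "norm W = 1"
    "R ** W \<in> Nsp (\<lambda>A. A \<bullet> M) (U j) R" "(\<lambda>n. Rh (\<sigma> n) ** Wh (\<sigma> n)) \<longlonglongrightarrow> R ** W"
    using limit_main[OF Uinv[OF j] NM M3 N3 RnN Wh NnN cl] by blast
  show ?thesis
    unfolding loadf M_def[symmetric] using res by blast
qed


end
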